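(* Let $\mathcal P\subseteq\mathcal G$ be a group property. If $\mathcal P$ has the Baire property as a subset of $\mathcal G$, then $\mathcal P$ is either meager or comeager in $\mathcal G$.
   Context: Let $\mathbb N=\{1,2,3,\dots\}$. Equip $\mathbb N^{\mathbb N\times\mathbb N}$ (the set of infinite tables of natural numbers) with the product topology of the discrete topology on $\mathbb N$. Let $\mathcal G$ be the subspace consisting of those $A\in\mathbb N^{\mathbb N\times\mathbb N}$ that are the multiplication table of a group on the underlying set $\mathbb N$ whose identity element is $1$ (i.e. $A(n,m)$ is the product $n\cdot m$). For $G\in\mathcal G$, $\overline G$ denotes the group on $\mathbb N$ with multiplication table $G$. A group property is a set $\mathcal P\subseteq\mathcal G$ that is invariant under isomorphism: if $G\in\mathcal G$, $H\in\mathcal P$ and $\overline G\cong\overline H$, then $G\in\mathcal P$. A set has the Baire property if it is the symmetric difference of an open set and a meager set. *)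

theory Defs
  imports "HOL-Analysis.Analysis" "HOL-Algebra.Group"
begin

definition nowhere_dense_in :: "'a topology \<Rightarrow> 'a set \<Rightarrow> bool" where
  "nowhere_dense_in X S \<longleftrightarrow> S \<subseteq> topspace X \<and> X interior_of (X closure_of S) = {}"

definition meager_in :: "'a topology \<Rightarrow> 'a set \<Rightarrow> bool" where
  "meager_in X S \<longleftrightarrow> S \<subseteq> topspace X \<and>
     (\<exists>F. countable F \<and> (\<forall>N\<in>F. nowhere_dense_in X N) \<and> S \<subseteq> \<Union>F)"

definition comeager_in :: "'a topology \<Rightarrow> 'a set \<Rightarrow> bool" where
  "comeager_in X S \<longleftrightarrow> S \<subseteq> topspace X \<and> meager_in X (topspace X - S)"

definition baire_property_in :: "'a topology \<Rightarrow> 'a set \<Rightarrow> bool" where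
  "baire_property_in X S \<longleftrightarrow>
     (\<exists>U M. openin X U \<and> meager_in X M \<and> S = (U - M) \<union> (M - U))"

abbreviation Npos :: "nat set" where "Npos \<equiv> {1..}"

text \<open>\<open>\<nat>\<^sup>\<nat>\<^sup>\<times>\<^sup>\<nat>\<close> with the product of discrete topologies; points are
  (extensional) functions on \<open>\<nat> \<times> \<nat>\<close> with values in \<open>\<nat>\<close>.\<close>
definition tables_top :: "(nat \<times> nat \<Rightarrow> nat) topology" where
  "tables_top = product_topology (\<lambda>_. discrete_topology Npos) (Npos \<times> Npos)"

definition grp_of :: "(nat \<times> nat \<Rightarrow> nat) \<Rightarrow> nat monoid" where
  "grp_of A = \<lparr>carrier = Npos, mult = (\<lambda>n m. A (n, m)), one = 1\<rparr>"

definition GrpTables :: "(nat \<times> nat \<Rightarrow> nat) set" where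
  "GrpTables = {A \<in> topspace tables_top. group (grp_of A)}"

definition G_top :: "(nat \<times> nat \<Rightarrow> nat) topology" where
  "G_top = subtopology tables_top GrpTables"

definition group_property :: "(nat \<times> nat \<Rightarrow> nat) set \<Rightarrow> bool" where
  "group_property P \<longleftrightarrow> P \<subseteq> GrpTables \<and>
     (\<forall>G\<in>GrpTables. \<forall>H\<in>P. grp_of G \<cong> grp_of H \<longrightarrow> G \<in> P)"

end

theory Submission
  imports Defs
begin

lemma top_T: "topspace tables_top = (Pi\<^sub>E (Npos \<times> Npos) (\<lambda>_. Npos))"
  by (simp add: tables_top_def)

lemma grp_iff:
  assumes "A \<in> topspace tables_top"
  shows "group (grp_of A) \<longleftrightarrow>
    (\<forall>a\<in>Npos. \<forall>b\<in>Npos. \<forall>c\<in>Npos. A (A (a,b), c) = A (a, A (b,c))) \<and>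
    (\<forall>n\<in>Npos. A (1,n) = n) \<and> (\<forall>n\<in>Npos. \<exists>m\<in>Npos. A (m,n) = 1)"
proof
  assume g: "group (grp_of A)"
  interpret group "grp_of A" by fact
  show "(\<forall>a\<in>Npos. \<forall>b\<in>Npos. \<forall>c\<in>Npos. A (A (a,b), c) = A (a, A (b,c))) \<and>
    (\<forall>n\<in>Npos. A (1,n) = n) \<and> (\<forall>n\<in>Npos. \<exists>m\<in>Npos. A (m,n) = 1)"
    using m_assoc l_one l_inv_ex by (auto simp: grp_of_def)
next
  assume h: "(\<forall>a\<in>Npos. \<forall>b\<in>Npos. \<forall>c\<in>Npos. A (A (a,b), c) = A (a, A (b,c))) \<and>
    (\<forall>n\<in>Npos. A (1,n) = n) \<and> (\<forall>n\<in>Npos. \<exists>m\<in>Npos. A (m,n) = 1)"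
  have cl: "\<And>x y. x \<in> Npos \<Longrightarrow> y \<in> Npos \<Longrightarrow> A (x,y) \<in> Npos"
    using assms by (auto simp: top_T PiE_iff)
  show "group (grp_of A)"
    apply (rule groupI)
    using h cl by (auto simp: grp_of_def)
qed

definition tr :: "(nat \<Rightarrow> 'b) \<Rightarrow> ('b,'m) monoid_scheme \<Rightarrow> (nat \<times> nat \<Rightarrow> nat)" where
  "tr f D = (\<lambda>(n,m). if n \<in> Npos \<and> m \<in> Npos then inv_into Npos f (f n \<otimes>\<^bsub>D\<^esub> f m) else undefined)"

lemma tr_app: "n \<in> Npos \<Longrightarrow> m \<in> Npos \<Longrightarrow> tr f D (n,m) = inv_into Npos f (f n \<otimes>\<^bsub>D\<^esub> f m)"
  by (simp add: tr_def)

lemma tr_grp: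
  assumes D: "group D" and f: "bij_betw f Npos (carrier D)" and f1: "f 1 = \<one>\<^bsub>D\<^esub>"
  shows "tr f D \<in> GrpTables" "f \<in> iso (grp_of (tr f D)) D"
proof -
  interpret group D by fact
  have inj: "inj_on f Npos" and im: "f ` Npos = carrier D" using f by (auto simp: bij_betw_def)
  have in1: "\<And>n m. n \<in> Npos \<Longrightarrow> m \<in> Npos \<Longrightarrow> tr f D (n,m) \<in> Npos"
    unfolding tr_app by (metis im f inv_into_into m_closed image_eqI)
  have ff: "\<And>n m. n \<in> Npos \<Longrightarrow> m \<in> Npos \<Longrightarrow> f (tr f D (n,m)) = f n \<otimes>\<^bsub>D\<^esub> f m"
    unfolding tr_app by (metis im f_inv_into_f m_closed image_eqI)
  have fc: "\<And>n. n \<in> Npos \<Longrightarrow> f n \<in> carrier D" using im by auto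
  have topT: "tr f D \<in> topspace tables_top"
    unfolding top_T using in1 by (auto simp: PiE_iff extensional_def tr_def)
  have "group (grp_of (tr f D))"
    unfolding grp_iff[OF topT]
  proof (intro conjI ballI)
    fix a b c :: nat assume abc: "a \<in> Npos" "b \<in> Npos" "c \<in> Npos"
    show "tr f D (tr f D (a, b), c) = tr f D (a, tr f D (b, c))"
      apply (rule inj_onD[OF inj])
      using abc in1 ff fc by (simp_all add: m_assoc)
  next
    fix n :: nat assume n: "n \<in> Npos"
    show "tr f D (1, n) = n"
      apply (rule inj_onD[OF inj])
      using n in1 ff fc f1 by simp_all
    obtain y where y: "y \<in> carrier D" "y \<otimes>\<^bsub>D\<^esub> f n = \<one>\<^bsub>D\<^esub>" using l_inv_ex fc n by blast
    then obtain m where m: "m \<in> Npos" "f m = y" using im by (metis imageE)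
    show "\<exists>m\<in>Npos. tr f D (m, n) = 1"
      apply (rule bexI[OF _ m(1)])
      apply (rule inj_onD[OF inj])
      using n m y in1 ff f1 by simp_all
  qed
  then show "tr f D \<in> GrpTables" using topT by (simp add: GrpTables_def)
  show "f \<in> iso (grp_of (tr f D)) D"
    unfolding iso_def hom_def using f fc ff by (auto simp: grp_of_def)
qed

definition phi :: "(nat \<Rightarrow> nat) \<Rightarrow> (nat \<times> nat \<Rightarrow> nat) \<Rightarrow> (nat \<times> nat \<Rightarrow> nat)" where
  "phi s A = tr s (grp_of A)"

lemma phi_app: "n \<in> Npos \<Longrightarrow> m \<in> Npos \<Longrightarrow> phi s A (n,m) = inv_into Npos s (A (s n, s m))"
  by (simp add: phi_def tr_app grp_of_def)

lemma phi_out: "\<not> (n \<in> Npos \<and> m \<in> Npos) \<Longrightarrow> phi s A (n,m) = undefined"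
  unfolding phi_def tr_def by auto

lemma phi_grp:
  assumes s: "bij_betw s Npos Npos" "s 1 = 1" and A: "A \<in> GrpTables"
  shows "phi s A \<in> GrpTables" "grp_of (phi s A) \<cong> grp_of A"
proof -
  have g: "group (grp_of A)" using A by (simp add: GrpTables_def)
  have b: "bij_betw s Npos (carrier (grp_of A))" "s 1 = \<one>\<^bsub>grp_of A\<^esub>" using s by (auto simp: grp_of_def)
  show "phi s A \<in> GrpTables" using tr_grp(1)[OF g b] by (simp add: phi_def)
  show "grp_of (phi s A) \<cong> grp_of A" using tr_grp(2)[OF g b] by (auto simp: phi_def is_iso_def)
qed

lemma inv_Npos: "bij_betw s Npos Npos \<Longrightarrow> x \<in> Npos \<Longrightarrow> inv_into Npos s x \<in> Npos"
  by (metis bij_betw_def inv_into_into)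

lemma inv_into_cong':
  assumes "\<And>x. x \<in> S \<Longrightarrow> f x = g x" shows "inv_into S f = inv_into S g"
proof (rule ext)
  fix y
  have "(\<lambda>x. x \<in> S \<and> f x = y) = (\<lambda>x. x \<in> S \<and> g x = y)" using assms by auto
  then show "inv_into S f y = inv_into S g y" by (simp add: inv_into_def)
qed

lemma phi_inv:
  assumes s: "bij_betw s Npos Npos" and A: "A \<in> topspace tables_top"
  shows "phi (inv_into Npos s) (phi s A) = A"
proof
  fix k show "phi (inv_into Npos s) (phi s A) k = A k"
  proof (cases k)
    case (Pair n m)
    show ?thesis
    proof (cases "n \<in> Npos \<and> m \<in> Npos")
      case True
      have i: "inv_into Npos s n \<in> Npos" "inv_into Npos s m \<in> Npos"
        using True s inv_Npos by blast+
      have "A (n,m) \<in> Npos" using A True by (auto simp: top_T PiE_iff)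
      then have "inv_into Npos s (A (n,m)) \<in> Npos" using s inv_Npos by blast
      then have "inv_into Npos (inv_into Npos s) (inv_into Npos s (A (n, m))) = s (inv_into Npos s (A (n, m)))"
        using s by (simp add: inv_into_inv_into_eq)
      also have "\<dots> = A (n,m)" using \<open>A (n,m) \<in> Npos\<close> s by (simp add: bij_betw_inv_into_right)
      finally show ?thesis using True i s
        by (simp add: Pair phi_app bij_betw_inv_into_right)
    next
      case False
      then show ?thesis using A by (auto simp: Pair phi_out top_T PiE_iff extensional_def)
    qed
  qed
qed

lemma phi_cong:
  assumes "\<And>x. x \<in> Npos \<Longrightarrow> f x = g x" shows "phi f = phi g"
proof -
  have e: "inv_into Npos f = inv_into Npos g" by (rule inv_into_cong') (rule assms)
  show ?thesis unfolding phi_def tr_def e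
    by (intro ext) (auto simp: assms)
qed

lemma inv_inv_Npos:
  assumes s: "bij_betw s Npos Npos"
  shows "phi (inv_into Npos (inv_into Npos s)) = phi s"
  by (rule phi_cong) (rule inv_into_inv_into_eq[OF s])

lemma proj_cont: "k \<in> Npos \<times> Npos \<Longrightarrow> continuous_map tables_top (discrete_topology Npos) (\<lambda>A. A k)"
  unfolding tables_top_def using continuous_map_product_projection[of k "Npos \<times> Npos" "\<lambda>_. discrete_topology Npos"]
  by simp

lemma phi_cont:
  assumes s: "bij_betw s Npos Npos" "s 1 = 1"
  shows "continuous_map G_top G_top (phi s)"
  unfolding G_top_def
proof (rule continuous_map_into_subtopology)
  show "phi s \<in> topspace (subtopology tables_top GrpTables) \<rightarrow> GrpTables"
    using phi_grp[OF s] by auto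
  show "continuous_map (subtopology tables_top GrpTables) tables_top (phi s)"
    unfolding tables_top_def continuous_map_componentwise
  proof (intro conjI ballI)
    show "phi s ` topspace (subtopology (product_topology (\<lambda>_. discrete_topology Npos) (Npos \<times> Npos)) GrpTables)
          \<subseteq> extensional (Npos \<times> Npos)"
      by (auto simp: extensional_def phi_out)
    fix k :: "nat \<times> nat" assume k: "k \<in> Npos \<times> Npos"
    then obtain n m where nm: "k = (n,m)" "n \<in> Npos" "m \<in> Npos" by auto
    have sk: "(s n, s m) \<in> Npos \<times> Npos" using s nm by (auto simp: bij_betw_def)
    have c1: "continuous_map (subtopology tables_top GrpTables) (discrete_topology Npos) (\<lambda>A. A (s n, s m))"
      by (rule continuous_map_from_subtopology[OF proj_cont[OF sk]])
    have c2: "continuous_map (discrete_topology Npos) (discrete_topology Npos) (inv_into Npos s)"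
      unfolding continuous_map_from_discrete_topology topspace_discrete_topology using inv_Npos[OF s(1)] by blast
    have "continuous_map (subtopology tables_top GrpTables) (discrete_topology Npos) (inv_into Npos s \<circ> (\<lambda>A. A (s n, s m)))"
      using continuous_map_compose[OF c1 c2] .
    moreover have "(\<lambda>x. phi s x k) = inv_into Npos s \<circ> (\<lambda>A. A (s n, s m))"
      by (intro ext) (simp add: nm(1) phi_app[OF nm(2,3)])
    ultimately show "continuous_map (subtopology (product_topology (\<lambda>_. discrete_topology Npos) (Npos \<times> Npos)) GrpTables)
          (discrete_topology Npos) (\<lambda>x. phi s x k)"
      unfolding tables_top_def by simp
  qed
qed

lemma top_G: "topspace G_top = GrpTables"
  by (auto simp: G_top_def GrpTables_def)

lemma phi_homeo:
  assumes s: "bij_betw s Npos Npos" "s 1 = 1"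
  shows "homeomorphic_map G_top G_top (phi s)"
proof -
  let ?t = "inv_into Npos s"
  have t: "bij_betw ?t Npos Npos" "?t 1 = 1" using s
    by (auto simp: bij_betw_inv_into) (metis bij_betw_def inv_into_f_f atLeast_iff order_refl)
  have GT: "\<And>A. A \<in> GrpTables \<Longrightarrow> A \<in> topspace tables_top" by (simp add: GrpTables_def)
  have "homeomorphic_maps G_top G_top (phi s) (phi ?t)"
    unfolding homeomorphic_maps_def top_G
  proof (intro conjI ballI)
    show "continuous_map G_top G_top (phi s)" by (rule phi_cont[OF s])
    show "continuous_map G_top G_top (phi ?t)" by (rule phi_cont[OF t])
    fix A assume A: "A \<in> GrpTables"
    show "phi ?t (phi s A) = A" by (rule phi_inv[OF s(1) GT[OF A]])
    show "phi s (phi ?t A) = A" using phi_inv[OF t(1) GT[OF A]] inv_inv_Npos[OF s(1)] by simp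
  qed
  then show ?thesis using homeomorphic_map_maps by blast
qed

lemma opn: "k \<in> Npos \<times> Npos \<Longrightarrow> openin tables_top {A \<in> topspace tables_top. A k \<in> S}"
proof -
  assume k: "k \<in> Npos \<times> Npos"
  have "{A \<in> topspace tables_top. A k \<in> S} = {A \<in> topspace tables_top. A k \<in> S \<inter> Npos}"
    using k by (auto simp: top_T PiE_iff)
  also have "openin tables_top \<dots>"
    by (rule openin_continuous_map_preimage[OF proj_cont[OF k]]) (simp add: openin_discrete_topology)
  finally show ?thesis .
qed

lemma cm_T: "completely_metrizable_space tables_top"
  unfolding tables_top_def completely_metrizable_space_product_topology
  apply (rule disjI2)
  apply (intro conjI)
   apply (rule countable_subset[OF subset_UNIV countableI_type])
  by (simp add: completely_metrizable_space_discrete_topology)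

lemma Grp_inter: "(countable intersection_of openin tables_top) GrpTables"
proof -
  define T where "T = topspace tables_top"
  define As where "As = (\<lambda>(a::nat,b::nat,c::nat,d::nat,e::nat). if a \<in> Npos \<and> b \<in> Npos \<and> c \<in> Npos \<and> d \<in> Npos \<and> e \<in> Npos
     then {A \<in> T. A(a,b) = d \<longrightarrow> A(b,c) = e \<longrightarrow> A(d,c) = A(a,e)} else T)"
  define Us where "Us = (\<lambda>n::nat. if n \<in> Npos then {A \<in> T. A(1,n) = n} else T)"
  define Is where "Is = (\<lambda>n::nat. if n \<in> Npos then {A \<in> T. \<exists>m\<in>Npos. A(m,n) = 1} else T)"
  define \<U> where "\<U> = insert T (range As \<union> range Us \<union> range Is)"
  have "countable \<U>" unfolding \<U>_def by simp
  moreover have "\<U> \<subseteq> Collect (openin tables_top)"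
  proof -
    have oT: "openin tables_top T" by (simp add: T_def)
    have "openin tables_top (As x)" for x
    proof -
      obtain a b c d e where x: "x = (a,b,c,d,e)" by (cases x) auto
      show ?thesis
      proof (cases "a \<in> Npos \<and> b \<in> Npos \<and> c \<in> Npos \<and> d \<in> Npos \<and> e \<in> Npos")
        case True
        have "{A \<in> T. A(a,b) = d \<longrightarrow> A(b,c) = e \<longrightarrow> A(d,c) = A(a,e)} =
          {A \<in> T. A (a,b) \<in> - {d}} \<union> {A \<in> T. A (b,c) \<in> - {e}} \<union>
          (\<Union>v. {A \<in> T. A (d,c) \<in> {v}} \<inter> {A \<in> T. A (a,e) \<in> {v}})" by auto
        also have "openin tables_top \<dots>"
        proof -
          have k: "(a,b) \<in> Npos \<times> Npos" "(b,c) \<in> Npos \<times> Npos" "(d,c) \<in> Npos \<times> Npos" "(a,e) \<in> Npos \<times> Npos"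
            using True by auto
          have "\<And>v. openin tables_top ({A \<in> T. A (d,c) \<in> {v}} \<inter> {A \<in> T. A (a,e) \<in> {v}})"
            unfolding T_def by (intro openin_Int opn k)
          then have "openin tables_top (\<Union>v. {A \<in> T. A (d,c) \<in> {v}} \<inter> {A \<in> T. A (a,e) \<in> {v}})"
            by (intro openin_Union) blast
          then show ?thesis unfolding T_def by (intro openin_Un opn k)
        qed
        finally show ?thesis using True by (simp add: As_def x)
      qed (auto simp: As_def x oT)
    qed
    moreover have "openin tables_top (Us n)" for n
    proof (cases "n \<in> Npos")
      case True
      have "{A \<in> T. A(1,n) = n} = {A \<in> T. A(1,n) \<in> {n}}" by auto
      then show ?thesis using True opn[of "(1,n)" "{n}"] by (simp add: Us_def T_def)
    qed (simp add: Us_def oT)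
    moreover have "openin tables_top (Is n)" for n
    proof (cases "n \<in> Npos")
      case True
      have "{A \<in> T. \<exists>m\<in>Npos. A(m,n) = 1} = (\<Union>m\<in>Npos. {A \<in> T. A(m,n) \<in> {1}})" by auto
      also have "openin tables_top \<dots>"
      proof -
        have "\<And>m. m \<in> Npos \<Longrightarrow> openin tables_top {A \<in> T. A(m,n) \<in> {1}}"
          unfolding T_def using True by (intro opn) auto
        then show ?thesis by (intro openin_Union) blast
      qed
      finally show ?thesis using True by (simp add: Is_def)
    qed (simp add: Is_def oT)
    ultimately show ?thesis using oT by (auto simp: \<U>_def)
  qed
  moreover have "\<Inter>\<U> = GrpTables"
  proof (intro equalityI subsetI)
    fix A assume A: "A \<in> \<Inter>\<U>"
    then have AT: "A \<in> T" by (simp add: \<U>_def)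
    have cl: "\<And>x y. x \<in> Npos \<Longrightarrow> y \<in> Npos \<Longrightarrow> A (x,y) \<in> Npos"
      using AT by (auto simp: T_def top_T PiE_iff)
    have "group (grp_of A)"
      unfolding grp_iff[OF AT[unfolded T_def]]
    proof (intro conjI ballI)
      fix a b c :: nat assume abc: "a \<in> Npos" "b \<in> Npos" "c \<in> Npos"
      have "A \<in> As (a,b,c,A(a,b),A(b,c))" using A by (auto simp: \<U>_def)
      then show "A (A (a, b), c) = A (a, A (b, c))" using abc cl by (simp add: As_def)
    next
      fix n :: nat assume n: "n \<in> Npos"
      have "A \<in> Us n" using A by (auto simp: \<U>_def)
      then show "A (1, n) = n" using n by (simp add: Us_def)
      have "A \<in> Is n" using A by (auto simp: \<U>_def)
      then show "\<exists>m\<in>Npos. A (m, n) = 1" using n by (simp add: Is_def)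
    qed
    then show "A \<in> GrpTables" using AT by (simp add: GrpTables_def T_def)
  next
    fix A assume A: "A \<in> GrpTables"
    then have AT: "A \<in> T" and g: "group (grp_of A)" by (auto simp: GrpTables_def T_def)
    note h = g[unfolded grp_iff[OF AT[unfolded T_def]]]
    show "A \<in> \<Inter>\<U>"
      unfolding \<U>_def using AT h by (auto simp: As_def Us_def Is_def)
  qed
  ultimately show ?thesis unfolding intersection_of_def by blast
qed

lemma cm_G: "completely_metrizable_space G_top"
  unfolding G_top_def by (rule completely_metrizable_space_gdelta_in_alt[OF cm_T Grp_inter])

lemma meager_mono: assumes m: "meager_in X S" and st: "T \<subseteq> S" shows "meager_in X T"
proof -
  obtain F where F: "countable F" "\<forall>N\<in>F. nowhere_dense_in X N" "S \<subseteq> \<Union>F"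
    using m unfolding meager_in_def by blast
  have t: "T \<subseteq> topspace X" using m st unfolding meager_in_def by blast
  have "T \<subseteq> \<Union>F" using st F(3) by (rule subset_trans)
  then have "countable F \<and> (\<forall>N\<in>F. nowhere_dense_in X N) \<and> T \<subseteq> \<Union>F" using F(1,2) by blast
  then show ?thesis
    apply (unfold meager_in_def)
    apply (rule conjI[OF t])
    apply (rule exI[of _ F])
    by assumption
qed

lemma meager_Un: "meager_in X S \<Longrightarrow> meager_in X T \<Longrightarrow> meager_in X (S \<union> T)"
proof -
  assume a1: "meager_in X S" and a2: "meager_in X T"
  obtain F1 where f1: "countable F1" "\<forall>N\<in>F1. nowhere_dense_in X N" "S \<subseteq> \<Union>F1"
    using a1 unfolding meager_in_def by blast
  obtain F2 where f2: "countable F2" "\<forall>N\<in>F2. nowhere_dense_in X N" "T \<subseteq> \<Union>F2"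
    using a2 unfolding meager_in_def by blast
  have "S \<subseteq> topspace X" "T \<subseteq> topspace X" using a1 a2 unfolding meager_in_def by blast+
  note h = f1 f2 this
  have c: "countable (F1 \<union> F2)" by (rule countable_Un[OF h(1) h(4)])
  have n: "\<forall>N\<in>F1 \<union> F2. nowhere_dense_in X N" unfolding ball_Un by (rule conjI[OF h(2) h(5)])
  have s: "S \<union> T \<subseteq> \<Union>(F1 \<union> F2)" unfolding Union_Un_distrib by (rule Un_mono[OF h(3) h(6)])
  have t: "S \<union> T \<subseteq> topspace X" by (rule Un_least[OF h(7) h(8)])
  show ?thesis
    apply (unfold meager_in_def)
    apply (rule conjI[OF t])
    apply (rule exI[of _ "F1 \<union> F2"])
    by (rule conjI[OF c conjI[OF n s]])
qed

lemma nd_meager: assumes "nowhere_dense_in X N" shows "meager_in X N"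
proof -
  have t: "N \<subseteq> topspace X" using assms by (simp add: nowhere_dense_in_def)
  have "countable {N} \<and> (\<forall>N'\<in>{N}. nowhere_dense_in X N') \<and> N \<subseteq> \<Union>{N}"
    using assms by simp
  then show ?thesis
    apply (unfold meager_in_def)
    apply (rule conjI[OF t])
    apply (rule exI[of _ "{N}"])
    by assumption
qed

lemma nd_homeo:
  assumes h: "homeomorphic_map X X f" and N: "nowhere_dense_in X N"
  shows "nowhere_dense_in X (f ` N)"
proof -
  have Nt: "N \<subseteq> topspace X" using N by (simp add: nowhere_dense_in_def)
  have sur: "f ` topspace X = topspace X" using homeomorphic_imp_surjective_map[OF h] .
  have "X closure_of (f ` N) = f ` (X closure_of N)" by (rule homeomorphic_map_closure_of[OF h Nt])
  moreover have "X interior_of (f ` (X closure_of N)) = f ` (X interior_of (X closure_of N))"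
    by (rule homeomorphic_map_interior_of[OF h closure_of_subset_topspace])
  moreover have "f ` N \<subseteq> topspace X" using Nt sur by blast
  ultimately show ?thesis using N unfolding nowhere_dense_in_def by simp
qed

lemma meager_homeo:
  assumes h: "homeomorphic_map X X f" and M: "meager_in X M"
  shows "meager_in X (f ` M)"
proof -
  obtain F where F: "countable F" "\<forall>N\<in>F. nowhere_dense_in X N" "M \<subseteq> \<Union>F" "M \<subseteq> topspace X"
    using M unfolding meager_in_def by blast
  have sur: "f ` topspace X = topspace X" using homeomorphic_imp_surjective_map[OF h] .
  show ?thesis unfolding meager_in_def
  proof (intro conjI exI[of _ "(\<lambda>N. f ` N) ` F"])
    show "f ` M \<subseteq> topspace X" using F(4) sur by blast
    show "countable ((`) f ` F)" by (rule countable_image[OF F(1)])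
    show "\<forall>N\<in>(`) f ` F. nowhere_dense_in X N"
    proof
      fix N' assume "N' \<in> (`) f ` F"
      then obtain N where N: "N \<in> F" "N' = f ` N" by blast
      have "nowhere_dense_in X N" using F(2) N(1) by blast
      then show "nowhere_dense_in X N'" unfolding N(2) by (rule nd_homeo[OF h])
    qed
    show "f ` M \<subseteq> \<Union> ((`) f ` F)" using F(3) by blast
  qed
qed

lemma Baire_open:
  assumes W: "openin G_top W" and m: "meager_in G_top W"
  shows "W = {}"
proof -
  obtain F where F: "countable F" "\<forall>N\<in>F. nowhere_dense_in G_top N" "W \<subseteq> \<Union>F"
    using m unfolding meager_in_def by blast
  have "G_top interior_of \<Union>((\<lambda>N. G_top closure_of N) ` F) = {}"
  proof (rule Baire_category_alt)
    show "completely_metrizable_space G_top \<or> locally_compact_space G_top \<and> regular_space G_top"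
      using cm_G by blast
    show "countable ((\<lambda>N. G_top closure_of N) ` F)" using F(1) by blast
    fix T assume "T \<in> (\<lambda>N. G_top closure_of N) ` F"
    then obtain N where "N \<in> F" "T = G_top closure_of N" by blast
    then show "closedin G_top T \<and> G_top interior_of T = {}"
      using F(2) unfolding nowhere_dense_in_def by simp
  qed
  moreover have "W \<subseteq> \<Union>((\<lambda>N. G_top closure_of N) ` F)"
  proof
    fix x assume "x \<in> W"
    then obtain N where N: "N \<in> F" "x \<in> N" using F(3) by blast
    then have "N \<subseteq> topspace G_top" using F(2) unfolding nowhere_dense_in_def by blast
    then have "x \<in> G_top closure_of N" using closure_of_subset N(2) by blast
    then show "x \<in> \<Union>((\<lambda>N. G_top closure_of N) ` F)" using N(1) by blast
  qed
  ultimately show ?thesis using interior_of_maximal[OF _ W] by blast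
qed

lemma nbhd:
  assumes U: "openin G_top U" and H: "H \<in> U"
  shows "\<exists>K. finite K \<and> K \<subseteq> Npos \<times> Npos \<and> (\<forall>A\<in>GrpTables. (\<forall>k\<in>K. A k = H k) \<longrightarrow> A \<in> U)"
proof -
  obtain U' where U': "openin tables_top U'" "U = U' \<inter> GrpTables"
    using U unfolding G_top_def openin_subtopology by blast
  then have "H \<in> U'" using H by auto
  then obtain W where W: "finite {i \<in> Npos \<times> Npos. W i \<noteq> Npos}"
     "\<forall>i\<in>Npos \<times> Npos. openin (discrete_topology Npos) (W i)"
     "H \<in> Pi\<^sub>E (Npos \<times> Npos) W" "Pi\<^sub>E (Npos \<times> Npos) W \<subseteq> U'"
    using U'(1) unfolding tables_top_def openin_product_topology_alt topspace_discrete_topology by blast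
  show ?thesis
  proof (intro exI conjI ballI impI)
    show "finite {i \<in> Npos \<times> Npos. W i \<noteq> Npos}" by (rule W(1))
    show "{i \<in> Npos \<times> Npos. W i \<noteq> Npos} \<subseteq> Npos \<times> Npos" by blast
    fix A assume A: "A \<in> GrpTables" and ag: "\<forall>k\<in>{i \<in> Npos \<times> Npos. W i \<noteq> Npos}. A k = H k"
    have AT: "A \<in> Pi\<^sub>E (Npos \<times> Npos) (\<lambda>_. Npos)" using A by (simp add: GrpTables_def top_T)
    have "A \<in> Pi\<^sub>E (Npos \<times> Npos) W"
    proof -
      have "A i \<in> W i" if i: "i \<in> Npos \<times> Npos" for i
      proof (cases "W i = Npos")
        case True then show ?thesis using AT i by (auto simp: PiE_iff)
      next
        case False
        then have "A i = H i" using ag i by blast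
        moreover have "H i \<in> W i" using W(3) i by (rule PiE_mem)
        ultimately show ?thesis by simp
      qed
      then show ?thesis using AT by (auto simp: PiE_iff)
    qed
    then have "A \<in> U'" using W(4) by (rule rev_subsetD)
    then show "A \<in> U" using U'(2) A by simp
  qed
qed


lemma ext_bij:
  assumes F: "finite F" "F \<subseteq> Npos" and e: "inj_on e F" "e ` F \<subseteq> Npos \<times> Npos"
  shows "\<exists>b. bij_betw b Npos (Npos \<times> Npos) \<and> (\<forall>x\<in>F. b x = e x)"
proof -
  define R where "R = Npos - F"
  define S where "S = Npos \<times> Npos - e ` F"
  have iN: "infinite Npos" by (rule infinite_Ici)
  have ne: "Npos \<noteq> {}" by blast
  have iNN: "infinite (Npos \<times> Npos)"
  proof
    assume "finite (Npos \<times> Npos)"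
    then have "finite Npos" using finite_cartesian_productD1 ne by blast
    then show False using iN by blast
  qed
  have R: "infinite R" "countable R" unfolding R_def
    by (rule Diff_infinite_finite[OF F(1) iN]) (rule countable_subset[OF subset_UNIV countableI_type])
  have S: "infinite S" "countable S" unfolding S_def
    by (rule Diff_infinite_finite[OF finite_imageI[OF F(1)] iNN]) (rule countable_subset[OF subset_UNIV countableI_type])
  define g where "g = from_nat_into S \<circ> to_nat_on R"
  have g: "bij_betw g R S" unfolding g_def
    using bij_betw_trans[OF to_nat_on_infinite[OF R(2,1)] bij_betw_from_nat_into[OF S(2,1)]] .
  define b where "b x = (if x \<in> F then e x else g x)" for x
  have b1: "bij_betw b F (e ` F)"
  proof -
    have "bij_betw e F (e ` F)" by (rule inj_on_imp_bij_betw[OF e(1)])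
    moreover have "\<And>x. x \<in> F \<Longrightarrow> b x = e x" by (simp add: b_def)
    ultimately show ?thesis using bij_betw_cong by metis
  qed
  have b2: "bij_betw b R S"
  proof -
    have "\<And>x. x \<in> R \<Longrightarrow> b x = g x" by (simp add: b_def R_def)
    then show ?thesis using g bij_betw_cong by metis
  qed
  have "bij_betw b (F \<union> R) (e ` F \<union> S)"
    by (rule bij_betw_combine[OF b1 b2]) (simp add: S_def)
  moreover have "F \<union> R = Npos" using F(2) unfolding R_def by blast
  moreover have "e ` F \<union> S = Npos \<times> Npos" using e(2) unfolding S_def by blast
  ultimately show ?thesis by (intro exI[of _ b]) (simp add: b_def)
qed

lemma grp_one: "H \<in> GrpTables \<Longrightarrow> n \<in> Npos \<Longrightarrow> H (1,n) = n"
  using grp_iff[of H] by (auto simp: GrpTables_def)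

lemma grp_cl: "H \<in> GrpTables \<Longrightarrow> k \<in> Npos \<times> Npos \<Longrightarrow> H k \<in> Npos"
  by (auto simp: GrpTables_def top_T PiE_iff)

lemma trans_lemma:
  assumes U: "openin G_top U" "U \<noteq> {}" and V: "openin G_top V" "V \<noteq> {}"
  shows "\<exists>s. bij_betw s Npos Npos \<and> s 1 = 1 \<and> (\<exists>A\<in>V. phi s A \<in> U)"
proof -
  obtain H1 where H1: "H1 \<in> V" using V by blast
  obtain H2 where H2: "H2 \<in> U" using U by blast
  have G1: "H1 \<in> GrpTables" using H1 V(1) openin_subset top_G by blast
  have G2: "H2 \<in> GrpTables" using H2 U(1) openin_subset top_G by blast
  obtain K1 where K1: "finite K1" "K1 \<subseteq> Npos \<times> Npos" "\<forall>A\<in>GrpTables. (\<forall>k\<in>K1. A k = H1 k) \<longrightarrow> A \<in> V"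
    using nbhd[OF V(1) H1] by blast
  obtain K2 where K2: "finite K2" "K2 \<subseteq> Npos \<times> Npos" "\<forall>A\<in>GrpTables. (\<forall>k\<in>K2. A k = H2 k) \<longrightarrow> A \<in> U"
    using nbhd[OF U(1) H2] by blast
  define F1 where "F1 = insert 1 (fst ` K1 \<union> snd ` K1 \<union> H1 ` K1)"
  define F2 where "F2 = insert 1 (fst ` K2 \<union> snd ` K2 \<union> H2 ` K2)"
  have F1: "finite F1" "F1 \<subseteq> Npos" unfolding F1_def using K1 grp_cl[OF G1] by auto
  have F2: "finite F2" "F2 \<subseteq> Npos" unfolding F2_def using K2 grp_cl[OF G2] by auto
  obtain b where b: "bij_betw b Npos (Npos \<times> Npos)" "\<forall>x\<in>F1. b x = (x,1)"
    using ext_bij[OF F1, of "\<lambda>x. (x,1)"] F1(2) by (auto simp: inj_on_def)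
  obtain c where c: "bij_betw c Npos (Npos \<times> Npos)" "\<forall>x\<in>F2. c x = (1,x)"
    using ext_bij[OF F2, of "\<lambda>x. (1,x)"] F2(2) by (auto simp: inj_on_def)
  define D where "D = grp_of H1 \<times>\<times> grp_of H2"
  have gD: "group D" unfolding D_def
    using G1 G2 by (intro DirProd_group) (auto simp: GrpTables_def)
  have cD: "carrier D = Npos \<times> Npos" by (simp add: D_def grp_of_def)
  have mD: "\<And>x y u v. (x,y) \<otimes>\<^bsub>D\<^esub> (u,v) = (H1 (x,u), H2 (y,v))" by (simp add: D_def grp_of_def)
  have oneF1: "1 \<in> F1" and oneF2: "1 \<in> F2" by (simp_all add: F1_def F2_def)
  have b1: "b 1 = \<one>\<^bsub>D\<^esub>" using b(2) oneF1 by (simp add: D_def grp_of_def)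
  have binj: "inj_on b Npos" using b(1) by (simp add: bij_betw_def)
  have cinj: "inj_on c Npos" using c(1) by (simp add: bij_betw_def)
  define A where "A = tr b D"
  have AG: "A \<in> GrpTables" unfolding A_def using tr_grp(1)[OF gD b(1)[folded cD] b1] .
  have "A \<in> V"
  proof -
    have "A k = H1 k" if k: "k \<in> K1" for k
    proof -
      obtain n m where nm: "k = (n,m)" by (cases k)
      have inF: "n \<in> F1" "m \<in> F1" "H1 (n,m) \<in> F1" using k nm unfolding F1_def by force+
      have Np: "n \<in> Npos" "m \<in> Npos" "H1 (n,m) \<in> Npos" using inF F1(2) by auto
      have "A (n,m) = inv_into Npos b (b n \<otimes>\<^bsub>D\<^esub> b m)" unfolding A_def by (rule tr_app[OF Np(1,2)])
      also have "b n \<otimes>\<^bsub>D\<^esub> b m = (H1 (n,m), H2 (1,1))" using b(2) inF by (simp add: mD)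
      also have "H2 (1,1) = 1" using grp_one[OF G2] by simp
      also have "(H1 (n,m), 1) = b (H1 (n,m))" using b(2) inF by simp
      also have "inv_into Npos b (b (H1 (n,m))) = H1 (n,m)" by (rule inv_into_f_f[OF binj Np(3)])
      finally show ?thesis by (simp add: nm)
    qed
    then show ?thesis using K1(3) AG by blast
  qed
  define s where "s = inv_into Npos b \<circ> c"
  have s: "bij_betw s Npos Npos" unfolding s_def
    by (rule bij_betw_trans[OF c(1) bij_betw_inv_into[OF b(1)]])
  have bs: "\<And>x. x \<in> Npos \<Longrightarrow> b (s x) = c x"
    unfolding s_def using c(1) b(1) by (simp add: bij_betw_inv_into_right bij_betw_apply)
  have sN: "\<And>x. x \<in> Npos \<Longrightarrow> s x \<in> Npos" using bij_betw_apply[OF s] by blast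
  have sinj: "inj_on s Npos" using s by (simp add: bij_betw_def)
  have s1: "s 1 = 1"
  proof -
    have "b (s 1) = b 1" using bs[of 1] c(2) b(2) oneF1 oneF2 by simp
    then show ?thesis using binj sN[of 1] by (simp add: inj_on_eq_iff)
  qed
  have PG: "phi s A \<in> GrpTables" by (rule phi_grp(1)[OF s s1 AG])
  have "phi s A \<in> U"
  proof -
    have "phi s A k = H2 k" if k: "k \<in> K2" for k
    proof -
      obtain n m where nm: "k = (n,m)" by (cases k)
      have inF: "n \<in> F2" "m \<in> F2" "H2 (n,m) \<in> F2" using k nm unfolding F2_def by force+
      have Np: "n \<in> Npos" "m \<in> Npos" "H2 (n,m) \<in> Npos" using inF F2(2) by auto
      have "A (s n, s m) = inv_into Npos b (b (s n) \<otimes>\<^bsub>D\<^esub> b (s m))"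
        unfolding A_def by (rule tr_app[OF sN sN]) (rule Np)+
      also have "b (s n) \<otimes>\<^bsub>D\<^esub> b (s m) = (H1 (1,1), H2 (n,m))" using bs Np c(2) inF by (simp add: mD)
      also have "H1 (1,1) = 1" using grp_one[OF G1] by simp
      also have "(1, H2 (n,m)) = b (s (H2 (n,m)))" using bs[OF Np(3)] c(2) inF by simp
      also have "inv_into Npos b (b (s (H2 (n,m)))) = s (H2 (n,m))" by (rule inv_into_f_f[OF binj sN[OF Np(3)]])
      finally have "A (s n, s m) = s (H2 (n,m))" .
      then have "phi s A (n,m) = inv_into Npos s (s (H2 (n,m)))" by (simp add: phi_app[OF Np(1,2)])
      also have "\<dots> = H2 (n,m)" by (rule inv_into_f_f[OF sinj Np(3)])
      finally show ?thesis by (simp add: nm)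
    qed
    then show ?thesis using K2(3) PG by blast
  qed
  then show ?thesis using s s1 \<open>A \<in> V\<close> by blast
qed

lemma frontier_nd:
  assumes U: "openin X U"
  shows "nowhere_dense_in X (X closure_of U - U)"
proof -
  let ?N = "X closure_of U - U"
  have Nt: "?N \<subseteq> topspace X" by (rule subset_trans[OF Diff_subset closure_of_subset_topspace])
  have cl: "closedin X ?N" using U by (intro closedin_diff) simp_all
  have "X interior_of ?N = {}"
  proof (rule ccontr)
    assume "X interior_of ?N \<noteq> {}"
    then obtain x where x: "x \<in> X interior_of ?N" by auto
    have xN: "x \<in> ?N" using interior_of_subset x by (rule subsetD)
    then have xc: "x \<in> X closure_of U" by (rule DiffD1)
    have "\<forall>T. x \<in> T \<and> openin X T \<longrightarrow> (\<exists>y. y \<in> U \<and> y \<in> T)"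
      using xc unfolding in_closure_of by (rule conjunct2)
    then have "x \<in> X interior_of ?N \<and> openin X (X interior_of ?N) \<longrightarrow> (\<exists>y. y \<in> U \<and> y \<in> X interior_of ?N)"
      by (rule spec)
    then have "\<exists>y. y \<in> U \<and> y \<in> X interior_of ?N" using conjI[OF x openin_interior_of] by (rule mp)
    then obtain y where y: "y \<in> U" "y \<in> X interior_of ?N" by (elim exE conjE)
    have "y \<in> ?N" using interior_of_subset y(2) by (rule subsetD)
    then show False using y(1) by (simp)
  qed
  then show ?thesis using Nt cl by (simp add: nowhere_dense_in_def closure_of_closedin)
qed

theorem theorem5p3:
  assumes "group_property P"
    and "baire_property_in G_top P"
  shows "meager_in G_top P \<or> comeager_in G_top P"
proof (rule ccontr)
  assume neg: "\<not> (meager_in G_top P \<or> comeager_in G_top P)"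
  have gp: "P \<subseteq> GrpTables \<and> (\<forall>G\<in>GrpTables. \<forall>H\<in>P. grp_of G \<cong> grp_of H \<longrightarrow> G \<in> P)"
    using assms(1) unfolding group_property_def by assumption
  have PG: "P \<subseteq> GrpTables" using gp by (rule conjunct1)
  have inv: "\<forall>G\<in>GrpTables. \<forall>H\<in>P. grp_of G \<cong> grp_of H \<longrightarrow> G \<in> P" using gp by (rule conjunct2)
  obtain U M where U: "openin G_top U" and M: "meager_in G_top M" and PUM: "P = (U - M) \<union> (M - U)"
  proof -
    have "\<exists>U M. openin G_top U \<and> meager_in G_top M \<and> P = (U - M) \<union> (M - U)"
      using assms(2) unfolding baire_property_in_def by assumption
    then show ?thesis using that by blast
  qed
  have UG: "U \<subseteq> GrpTables" using openin_subset[OF U] top_G by simp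
  have Une: "U \<noteq> {}"
  proof
    assume "U = {}"
    then have "P \<subseteq> M" unfolding PUM by blast
    then have "meager_in G_top P" by (rule meager_mono[OF M])
    then show False using neg by blast
  qed
  define V where "V = GrpTables - G_top closure_of U"
  have V: "openin G_top V" unfolding V_def
    using openin_diff[OF openin_topspace closedin_closure_of, of G_top U] by (simp add: top_G)
  have UclU: "U \<subseteq> G_top closure_of U" by (rule closure_of_subset) (simp add: top_G UG)
  have VU: "V \<inter> U = {}" using UclU unfolding V_def by blast
  have Vne: "V \<noteq> {}"
  proof
    assume "V = {}"
    then have GU: "GrpTables \<subseteq> G_top closure_of U" unfolding V_def by blast
    have "GrpTables - P \<subseteq> M \<union> (G_top closure_of U - U)"
      using GU unfolding PUM by blast
    moreover have "meager_in G_top (M \<union> (G_top closure_of U - U))"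
      by (rule meager_Un[OF M nd_meager[OF frontier_nd[OF U]]])
    ultimately have "meager_in G_top (GrpTables - P)" by (rule meager_mono[rotated])
    then have "comeager_in G_top P" using PG by (simp add: comeager_in_def top_G)
    then show False using neg by blast
  qed
  obtain s A where s: "bij_betw s Npos Npos" "s 1 = 1" and A: "A \<in> V" "phi s A \<in> U"
    using trans_lemma[OF U Une V Vne] by blast
  define t where "t = inv_into Npos s"
  have t: "bij_betw t Npos Npos" "t 1 = 1" unfolding t_def using s
    by (auto simp: bij_betw_inv_into) (metis bij_betw_def inv_into_f_f atLeast_iff order_refl)
  have hom: "homeomorphic_map G_top G_top (phi t)" by (rule phi_homeo[OF t])
  define W where "W = {B \<in> topspace G_top. phi s B \<in> U} \<inter> V"
  have W: "openin G_top W" unfolding W_def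
    by (rule openin_Int[OF openin_continuous_map_preimage[OF phi_cont[OF s] U] V])
  have VG: "V \<subseteq> GrpTables" unfolding V_def by blast
  have AW: "A \<in> W" unfolding W_def using A VG top_G by blast
  have "W \<subseteq> M \<union> phi t ` M"
  proof
    fix B assume B: "B \<in> W"
    then have BG: "B \<in> GrpTables" and BV: "B \<in> V" and BU: "phi s B \<in> U"
      unfolding W_def by (auto simp: top_G)
    show "B \<in> M \<union> phi t ` M"
    proof (cases "B \<in> P")
      case True
      then have "B \<notin> U" using BV VU by blast
      then have "B \<in> M" using True unfolding PUM by blast
      then show ?thesis by blast
    next
      case False
      have pG: "phi s B \<in> GrpTables" and iso: "grp_of (phi s B) \<cong> grp_of B"
        using phi_grp[OF s BG] by blast+
      have "phi s B \<notin> P"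
      proof
        assume pP: "phi s B \<in> P"
        have g: "group (grp_of (phi s B))" using pG by (simp add: GrpTables_def)
        have "grp_of B \<cong> grp_of (phi s B)" by (rule group.iso_sym[OF g iso])
        then have "B \<in> P" using inv BG pP by (meson)
        then show False using False by blast
      qed
      then have "phi s B \<in> M" using BU unfolding PUM by blast
      moreover have "phi t (phi s B) = B" unfolding t_def
        by (rule phi_inv[OF s(1)]) (use BG in \<open>simp add: GrpTables_def\<close>)
      ultimately have "B \<in> phi t ` M" by (metis image_eqI)
      then show ?thesis by (rule UnI2)
    qed
  qed
  moreover have "meager_in G_top (M \<union> phi t ` M)"
    by (rule meager_Un[OF M meager_homeo[OF hom M]])
  ultimately have "meager_in G_top W" by (rule meager_mono[rotated])
  then have "W = {}" by (rule Baire_open[OF W])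
  then show False using AW by blast
qed

end
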